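(* Let $n,i,j$ be positive integers with $i+2\le j\le n-1$, and let $\lambda=i\,n\,(j-1)\,j$ and $\mu=(j-1)\,j\,n\,i$ (words of length $4$). For $\pi\in X_n(\lambda)$ with $\lambda$-decomposition $(\alpha,\lambda,\gamma,\delta)$, the permutation $\gamma'\mu\alpha'\delta$ lies in $X_n(\mu)$ and its $\mu$-decomposition is $(\gamma',\mu,\alpha',\delta)$. The map $X_n(\lambda)\to X_n(\mu)$ given by $(\alpha,\lambda,\gamma,\delta)\mapsto(\gamma',\mu,\alpha',\delta)$ (i.e. $\pi\mapsto\gamma'\mu\alpha'\delta$) is a bijection, whose inverse is the map sending $\sigma\in X_n(\mu)$ with $\mu$-decomposition $(\alpha,\mu,\gamma,\delta)$ to $(\gamma',\lambda,\alpha',\delta)$, i.e. to $\gamma'\lambda\alpha'\delta$.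
   Context: For a word $w=w_1\cdots w_k$ of pairwise distinct positive integers, an ascent is an index $t$ with $w_t<w_{t+1}$, a descent one with $w_t>w_{t+1}$, and the height is $h(w)=(\#\text{ascents})-(\#\text{descents})$ ($h(w)=0$ if $k\le1$). The word is ballot if every prefix has nonnegative height. $\mathcal{B}$ denotes the set of all finite ballot words of pairwise distinct positive integers (including the empty word). A ballot permutation of $[n]$ is a permutation $\pi_1\cdots\pi_n$ in one-line notation that is a ballot word. For a word $w$, $w_{-1}$ is its last letter and $w'=w_k\cdots w_1$ its reversal. Juxtaposition denotes concatenation. For a nonempty $\omega\in\mathcal{B}$, $X_n(\omega)$ is the set of ballot permutations $\pi$ of $[n]$ that can be written as $\pi=\alpha\omega\gamma\delta$ (with $\alpha,\gamma,\delta$ possibly empty) such that $h(\alpha\omega\gamma)=h(\omega)$. For $\pi\in X_n(\omega)$, its $\omega$-decomposition is the (unique) 4-tuple $(\alpha,\omega,\gamma,\delta)$ with $\pi=\alpha\omega\gamma\delta$, $h(\alpha\omega\gamma)=h(\omega)$ and $\gamma'\omega_{-1}\in\mathcal{B}$, where $\gamma$ is of maximal length among all words with these properties. *)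

theory Defs
  imports Main
begin

text \<open>Words are lists of natural numbers; positions are 0-based.\<close>

definition ascents :: "nat list \<Rightarrow> nat" where
  "ascents w = card {t. Suc t < length w \<and> w ! t < w ! Suc t}"

definition descents :: "nat list \<Rightarrow> nat" where
  "descents w = card {t. Suc t < length w \<and> w ! t > w ! Suc t}"

definition height :: "nat list \<Rightarrow> int" where
  "height w = int (ascents w) - int (descents w)"

definition ballot :: "nat list \<Rightarrow> bool" where
  "ballot w \<longleftrightarrow> distinct w \<and> (\<forall>x\<in>set w. 0 < x) \<and>
     (\<forall>k\<le>length w. 0 \<le> height (take k w))"

definition ballot_perm :: "nat \<Rightarrow> nat list \<Rightarrow> bool" where
  "ballot_perm n p \<longleftrightarrow> length p = n \<and> distinct p \<and> set p = {1..n} \<and> ballot p"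

definition X :: "nat \<Rightarrow> nat list \<Rightarrow> nat list set" where
  "X n \<omega> = {p. ballot_perm n p \<and>
     (\<exists>\<alpha> \<gamma> \<delta>. p = \<alpha> @ \<omega> @ \<gamma> @ \<delta> \<and> height (\<alpha> @ \<omega> @ \<gamma>) = height \<omega>)}"

definition decomp_cand :: "nat list \<Rightarrow> nat list \<Rightarrow> nat list \<times> nat list \<times> nat list \<Rightarrow> bool" where
  "decomp_cand \<omega> p t \<longleftrightarrow> (case t of (\<alpha>, \<gamma>, \<delta>) \<Rightarrow>
     p = \<alpha> @ \<omega> @ \<gamma> @ \<delta> \<and> height (\<alpha> @ \<omega> @ \<gamma>) = height \<omega> \<and>
     ballot (rev \<gamma> @ [last \<omega>]))"

definition is_decomp :: "nat list \<Rightarrow> nat list \<Rightarrow> nat list \<times> nat list \<times> nat list \<Rightarrow> bool" where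
  "is_decomp \<omega> p t \<longleftrightarrow> decomp_cand \<omega> p t \<and>
     (\<forall>t'. decomp_cand \<omega> p t' \<longrightarrow> length (fst (snd t')) \<le> length (fst (snd t)))"

text \<open>The (unique) omega-decomposition (alpha, gamma, delta) of p; the word omega itself is implicit.\<close>
definition decomp :: "nat list \<Rightarrow> nat list \<Rightarrow> nat list \<times> nat list \<times> nat list" where
  "decomp \<omega> p = (THE t. is_decomp \<omega> p t)"

definition swap_map :: "nat list \<Rightarrow> nat list \<Rightarrow> nat list \<Rightarrow> nat list" where
  "swap_map \<omega>1 \<omega>2 p = (case decomp \<omega>1 p of (\<alpha>, \<gamma>, \<delta>) \<Rightarrow> rev \<gamma> @ \<omega>2 @ rev \<alpha> @ \<delta>)"

end

theory Submission imports Defs begin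

definition sg :: "nat \<Rightarrow> nat \<Rightarrow> int" where
  "sg a b = (if a < b then 1 else if b < a then -1 else 0)"

lemma card_step:
  assumes "S = (if c then {0} else {}) \<union> Suc ` T" "finite T"
  shows "card S = (if c then 1 else 0) + card T"
proof -
  have "card (Suc ` T) = card T" by (simp add: card_image)
  moreover have "0 \<notin> Suc ` T" by auto
  ultimately show ?thesis using assms by (auto simp: card_insert_if)
qed

lemma asc_Cons2: "ascents (a#b#r) = (if a<b then 1 else 0) + ascents (b#r)"
  unfolding ascents_def
proof (rule card_step)
  show "finite {t. Suc t < length (b # r) \<and> (b # r) ! t < (b # r) ! Suc t}" by simp
  show "{t. Suc t < length (a # b # r) \<and> (a # b # r) ! t < (a # b # r) ! Suc t} =
    (if a < b then {0} else {}) \<union> Suc ` {t. Suc t < length (b # r) \<and> (b # r) ! t < (b # r) ! Suc t}"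
    apply (auto simp: image_iff split: if_splits)
    apply (case_tac x; auto)+
    done
qed

lemma desc_Cons2: "descents (a#b#r) = (if b<a then 1 else 0) + descents (b#r)"
  unfolding descents_def
proof (rule card_step)
  show "finite {t. Suc t < length (b # r) \<and> (b # r) ! t > (b # r) ! Suc t}" by simp
  show "{t. Suc t < length (a # b # r) \<and> (a # b # r) ! t > (a # b # r) ! Suc t} =
    (if b < a then {0} else {}) \<union> Suc ` {t. Suc t < length (b # r) \<and> (b # r) ! t > (b # r) ! Suc t}"
    apply (auto simp: image_iff split: if_splits)
    apply (case_tac x; auto)+
    done
qed

lemma height_Nil[simp]: "height [] = 0"
  by (simp add: height_def ascents_def descents_def)
lemma height_single[simp]: "height [a] = 0"
  by (simp add: height_def ascents_def descents_def)
lemma height_Cons2[simp]: "height (a#b#r) = sg a b + height (b#r)"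
  by (simp add: height_def asc_Cons2 desc_Cons2 sg_def)

lemma sg_anti: "sg b a = - sg a b" by (simp add: sg_def)

lemma sg_pm: "a \<noteq> b \<Longrightarrow> sg a b = 1 \<or> sg a b = -1" by (auto simp: sg_def)

lemma height_app_last: "u \<noteq> [] \<Longrightarrow> height (u @ v) = height u + height (last u # v)"
proof (induction u rule: induct_list012)
  case (3 x y zs) then show ?case by simp
qed auto

lemma height_app_hd: "w \<noteq> [] \<Longrightarrow> height (a @ w) = height (a @ [hd w]) + height w"
proof (induction a rule: induct_list012)
  case 1 then show ?case by simp
next
  case (2 x) then show ?case by (cases w) auto
next
  case (3 x y zs) then show ?case by simp
qed

lemma height_app2: "u \<noteq> [] \<Longrightarrow> v \<noteq> [] \<Longrightarrow> height (u @ v) = height u + sg (last u) (hd v) + height v"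
  by (simp add: height_app_last) (cases v, auto)

lemma height_Cons_hd: "w \<noteq> [] \<Longrightarrow> height (x # w) = sg x (hd w) + height w"
  by (cases w) auto

lemma height_rev: "height (rev w) = - height w"
proof (induction w)
  case (Cons x w)
  show ?case
  proof (cases "w = []")
    case True then show ?thesis by simp
  next
    case False
    have "height (rev (x # w)) = height (rev w @ [x])" by simp
    also have "\<dots> = height (rev w) + height [last (rev w), x]"
      using height_app_last[of "rev w" "[x]"] False by simp
    also have "\<dots> = - height w + sg (hd w) x"
    proof -
      have "height [last (rev w), x] = sg (hd w) x" using False by (simp add: last_rev)
      then show ?thesis using Cons.IH by linarith
    qed
    also have "\<dots> = - height (x # w)" using False by (simp add: height_Cons_hd sg_anti[of x])
    finally show ?thesis .
  qed
qed simp

lemma height_Cons_eq: "(g \<noteq> [] \<Longrightarrow> sg x (hd g) = sg y (hd g)) \<Longrightarrow> height (x#g) = height (y#g)"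
  by (cases g) auto

lemma height_snoc_eq: "(a \<noteq> [] \<Longrightarrow> sg (last a) x = sg (last a) y) \<Longrightarrow> height (a@[x]) = height (a@[y])"
  by (cases "a = []") (auto simp: height_app_last)

lemma height_snoc_ge: "height (u @ [y]) \<ge> height u - 1"
  by (cases "u = []") (auto simp: height_app_last sg_def)

lemma height_take_step: "Suc m \<le> length d \<Longrightarrow> height (take (Suc m) d) \<ge> height (take m d) - 1"
  by (simp add: take_Suc_conv_app_nth height_snoc_ge)

lemma KEY:
  assumes "u \<noteq> []" "last u = x" "d \<le> length g"
  shows "height (drop d (x#g)) = height (u@g) - height (u@take d g)"
proof (cases d)
  case 0 then show ?thesis using assms height_app_last[of u g] by simp
next
  case (Suc e)
  have e: "e < length g" using Suc assms by simp
  have "u @ g = (u @ take d g) @ drop d g" by simp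
  then have "height (u@g) = height (u @ take d g) + height (last (u @ take d g) # drop d g)"
    using height_app_last[of "u @ take d g" "drop d g"] assms by simp
  moreover have "last (u @ take d g) = g ! e" using Suc e by (simp add: take_Suc_conv_app_nth)
  moreover have "g ! e # drop d g = drop d (x#g)" using Suc e by (simp add: Cons_nth_drop_Suc)
  ultimately show ?thesis by simp
qed

lemma ballot_rev_iff:
  assumes "u \<noteq> []" "last u = x"
  shows "ballot (rev g @ [x]) \<longleftrightarrow> distinct (x#g) \<and> (\<forall>y\<in>set (x#g). 0<y) \<and>
     (\<forall>m\<le>length g. height (u @ g) \<le> height (u @ take m g))"
proof -
  have tk: "take k (rev g @ [x]) = rev (drop (Suc (length g) - k) (x#g))" for k
    using take_rev[of k "x#g"] by simp
  have "(\<forall>k\<le>length (rev g @ [x]). 0 \<le> height (take k (rev g @ [x]))) \<longleftrightarrow>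
        (\<forall>m\<le>length g. height (u @ g) \<le> height (u @ take m g))"
  proof
    assume H: "\<forall>k\<le>length (rev g @ [x]). 0 \<le> height (take k (rev g @ [x]))"
    show "\<forall>m\<le>length g. height (u @ g) \<le> height (u @ take m g)"
    proof (intro allI impI)
      fix m assume m: "m \<le> length g"
      have h1: "Suc (length g) - m \<le> length (rev g @ [x])" by simp
      have "0 \<le> height (take (Suc (length g) - m) (rev g @ [x]))" using H h1 by blast
      moreover have "take (Suc (length g) - m) (rev g @ [x]) = rev (drop m (x#g))"
        using tk[of "Suc (length g) - m"] m by (simp add: Suc_diff_le)
      ultimately have "0 \<le> - height (drop m (x#g))" by (simp add: height_rev)
      then show "height (u @ g) \<le> height (u @ take m g)" using KEY[OF assms m] by simp
    qed
  next
    assume H: "\<forall>m\<le>length g. height (u @ g) \<le> height (u @ take m g)"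
    show "\<forall>k\<le>length (rev g @ [x]). 0 \<le> height (take k (rev g @ [x]))"
    proof (intro allI impI)
      fix k assume k: "k \<le> length (rev g @ [x])"
      show "0 \<le> height (take k (rev g @ [x]))"
      proof (cases k)
        case 0 then show ?thesis by simp
      next
        case (Suc k')
        have m: "Suc (length g) - k \<le> length g" using Suc by simp
        have "height (take k (rev g @ [x])) = - height (drop (Suc (length g) - k) (x#g))"
          by (simp only: tk height_rev)
        then show ?thesis using H[rule_format, OF m] KEY[OF assms m] by simp
      qed
    qed
  qed
  note eq = this
  have d: "distinct (rev g @ [x]) = distinct (x#g)" by (simp add: conj_commute)
  have s: "set (rev g @ [x]) = set (x#g)" by simp
  show ?thesis unfolding ballot_def d s by (simp only: eq)
qed

definition hb :: "nat list \<Rightarrow> bool" where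
  "hb w \<longleftrightarrow> (\<forall>k\<le>length w. 0 \<le> height (take k w))"

lemma ballot_iff: "ballot w \<longleftrightarrow> distinct w \<and> (\<forall>x\<in>set w. 0 < x) \<and> hb w"
  by (simp add: ballot_def hb_def)

lemma hb_take: "hb w \<Longrightarrow> 0 \<le> height (take k w)"
  unfolding hb_def by (cases "k \<le> length w") auto

lemma hb_prefix: "hb (a @ b) \<Longrightarrow> 0 \<le> height a"
  using hb_take[of "a @ b" "length a"] by simp

lemma hb_app:
  assumes "hb a" "\<And>k. 1 \<le> k \<Longrightarrow> k \<le> length b \<Longrightarrow> 0 \<le> height (a @ take k b)"
  shows "hb (a @ b)"
  unfolding hb_def
proof (intro allI impI)
  fix k assume k: "k \<le> length (a @ b)"
  show "0 \<le> height (take k (a @ b))"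
  proof (cases "k \<le> length a")
    case True then show ?thesis using hb_take[OF assms(1), of k] by simp
  next
    case False
    then have "take k (a @ b) = a @ take (k - length a) b" by simp
    moreover have "1 \<le> k - length a" "k - length a \<le> length b" using False k by auto
    ultimately show ?thesis using assms(2) by simp
  qed
qed

lemma height_3: "w \<noteq> [] \<Longrightarrow> height (a @ w @ b) = height (a @ [hd w]) + height w + height (last w # b)"
  using height_app_hd[of "w @ b" a] height_app_last[of w b] by simp

lemma height_take_hd:
  assumes "P \<noteq> []" "1 \<le> m" "m \<le> length d"
  shows "height (P @ take m d) = height P + sg (last P) (hd d) + height (take m d)"
proof -
  have "take m d \<noteq> []" "hd (take m d) = hd d" using assms by (auto simp: hd_take)
  then show ?thesis using height_app2[OF assms(1), of "take m d"] by simp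
qed

lemma height_take1: "height (take (Suc 0) d) = 0"
  by (cases d) auto

lemma height_take_step_u:
  "Suc m \<le> length g \<Longrightarrow> height (u @ take (Suc m) g) \<ge> height (u @ take m g) - 1"
  using height_snoc_ge[of "u @ take m g" "g ! m"] by (simp add: take_Suc_conv_app_nth)

lemma POS:
  assumes "distinct (a @ w @ b)" "w \<noteq> []" "a @ w @ b = a2 @ w @ b2"
  shows "a = a2 \<and> b = b2"
proof -
  let ?L = "a @ w @ b"
  have i1: "?L ! length a = hd w" using assms(2) by (simp add: nth_append hd_conv_nth)
  have i2: "?L ! length a2 = hd w" using assms(2,3) by (simp add: nth_append hd_conv_nth)
  have l0: "length a2 < length (a2 @ w @ b2)" using assms(2) by simp
  have l1: "length a < length ?L" "length a2 < length ?L"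
    using assms(2) apply simp
    using l0 by (simp only: assms(3))
  have "length a = length a2" using nth_eq_iff_index_eq[OF assms(1) l1] i1 i2 by simp
  then show ?thesis using assms(3) by simp
qed

lemma cand_simp: "decomp_cand \<omega> p (a, g, d) \<longleftrightarrow>
   p = a @ \<omega> @ g @ d \<and> height (a @ \<omega> @ g) = height \<omega> \<and> ballot (rev g @ [last \<omega>])"
  by (simp add: decomp_cand_def)

lemma UNIQ:
  assumes "distinct p" "\<omega> \<noteq> []" "is_decomp \<omega> p t1" "is_decomp \<omega> p t2"
  shows "t1 = t2"
proof -
  obtain a1 g1 d1 where t1: "t1 = (a1, g1, d1)" by (cases t1) auto
  obtain a2 g2 d2 where t2: "t2 = (a2, g2, d2)" by (cases t2) auto
  have c1: "decomp_cand \<omega> p t1" and c2: "decomp_cand \<omega> p t2"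
    using assms(3,4) unfolding is_decomp_def by auto
  have l: "length g1 = length g2"
    using assms(3,4) c1 c2 unfolding is_decomp_def t1 t2 by (metis fst_conv snd_conv le_antisym)
  have p1: "p = a1 @ \<omega> @ (g1 @ d1)" and p2: "p = a2 @ \<omega> @ (g2 @ d2)"
    using c1 c2 t1 t2 by (simp_all add: cand_simp)
  have dd: "distinct (a1 @ \<omega> @ g1 @ d1)" using assms(1) by (simp only: p1[symmetric])
  have "a1 = a2 \<and> g1 @ d1 = g2 @ d2"
    by (rule POS[OF dd assms(2)]) (simp only: p1[symmetric] p2[symmetric])
  then show ?thesis using l t1 t2 by simp
qed

lemma DEC:
  assumes "distinct p" "\<omega> \<noteq> []" "is_decomp \<omega> p t"
  shows "decomp \<omega> p = t"
  unfolding decomp_def using assms UNIQ by blast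

lemma EXIST:
  assumes "p \<in> X n \<omega>" "\<omega> \<noteq> []"
  shows "\<exists>t. is_decomp \<omega> p t"
proof -
  from assms(1) obtain \<alpha> \<gamma>0 \<delta>0 where bp: "ballot_perm n p" and p: "p = \<alpha> @ \<omega> @ \<gamma>0 @ \<delta>0"
    and hc: "height (\<alpha> @ \<omega> @ \<gamma>0) = height \<omega>"
    unfolding X_def by auto
  have bal: "distinct p" "\<forall>x\<in>set p. 0 < x" "hb p" using bp by (auto simp: ballot_perm_def ballot_iff)
  define u where "u = \<alpha> @ \<omega>"
  define c where "c = height \<omega>"
  have lu: "last u = last \<omega>" "u \<noteq> []" using assms(2) by (auto simp: u_def)
  have "p = (\<alpha> @ [hd \<omega>]) @ (tl \<omega> @ \<gamma>0 @ \<delta>0)" using p assms(2) by simp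
  then have "0 \<le> height (\<alpha> @ [hd \<omega>])" using bal(3) hb_prefix by metis
  then have h0: "height u \<ge> c" using height_app_hd[OF assms(2), of \<alpha>] by (simp add: u_def c_def)
  define S where "S = {k. k \<le> length \<gamma>0 \<and> height (u @ take k \<gamma>0) \<le> c}"
  have "length \<gamma>0 \<in> S" using hc by (simp add: S_def u_def c_def)
  define k where "k = (LEAST k. k \<in> S)"
  have kS: "k \<in> S" unfolding k_def by (rule LeastI) fact
  have below: "height (u @ take m \<gamma>0) > c" if "m < k" for m
  proof -
    have "m \<notin> S" using not_less_Least[of m "\<lambda>k. k \<in> S"] that k_def by simp
    moreover have "m \<le> length \<gamma>0" using that kS by (simp add: S_def)
    ultimately show ?thesis by (simp add: S_def)
  qed
  have hk: "height (u @ take k \<gamma>0) = c"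
  proof (cases k)
    case 0 then show ?thesis using kS h0 by (simp add: S_def)
  next
    case (Suc k')
    have "height (u @ take (Suc k') \<gamma>0) \<ge> height (u @ take k' \<gamma>0) - 1"
      using kS Suc by (intro height_take_step_u) (simp add: S_def)
    then show ?thesis using below[of k'] kS Suc by (simp add: S_def)
  qed
  define g where "g = take k \<gamma>0"
  have kl: "k \<le> length \<gamma>0" using kS by (simp add: S_def)
  have cand: "decomp_cand \<omega> p (\<alpha>, g, drop k \<gamma>0 @ \<delta>0)"
    unfolding cand_simp
  proof (intro conjI)
    show "p = \<alpha> @ \<omega> @ g @ drop k \<gamma>0 @ \<delta>0" using p by (simp add: g_def)
    show "height (\<alpha> @ \<omega> @ g) = height \<omega>" using hk by (simp add: g_def u_def c_def)
    have d: "distinct (\<omega> @ \<gamma>0)" using bal(1) unfolding p by (simp add: Int_Un_distrib)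
    have "set g \<subseteq> set \<gamma>0" unfolding g_def by (rule set_take_subset)
    moreover have "last \<omega> \<in> set \<omega>" using assms(2) by simp
    ultimately have dg: "distinct (last \<omega> # g)" using d unfolding g_def by auto
    have pg: "\<forall>y\<in>set (last \<omega> # g). 0 < y" using bal(2) p \<open>set g \<subseteq> set \<gamma>0\<close> \<open>last \<omega> \<in> set \<omega>\<close> by auto
    have "\<forall>m\<le>length g. height (u @ g) \<le> height (u @ take m g)"
    proof (intro allI impI)
      fix m assume m: "m \<le> length g"
      then have mk: "m \<le> k" using kl by (simp add: g_def)
      have "take m g = take m \<gamma>0" using mk by (simp add: g_def min_def)
      then show "height (u @ g) \<le> height (u @ take m g)"
        using below[of m] hk mk by (cases "m = k") (auto simp: g_def)
    qed
    then show "ballot (rev g @ [last \<omega>])" using ballot_rev_iff[OF lu(2) lu(1)] dg pg by blast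
  qed
  have bnd: "\<forall>y. decomp_cand \<omega> p y \<longrightarrow> length (fst (snd y)) < Suc (length p)"
  proof (intro allI impI)
    fix y assume "decomp_cand \<omega> p y"
    then obtain a' g' d' where "y = (a', g', d')" "p = a' @ \<omega> @ g' @ d'" by (cases y) (auto simp: cand_simp)
    then show "length (fst (snd y)) < Suc (length p)" by simp
  qed
  obtain t where "decomp_cand \<omega> p t" "\<forall>y. decomp_cand \<omega> p y \<longrightarrow> length (fst (snd y)) \<le> length (fst (snd t))"
    using ex_has_greatest_nat[of "decomp_cand \<omega> p", OF cand bnd] by blast
  then show ?thesis unfolding is_decomp_def by blast
qed

lemma hb_prefix_hb: "hb (a @ b) \<Longrightarrow> hb a"
  unfolding hb_def
proof (intro allI impI)
  fix k assume H: "\<forall>k\<le>length (a @ b). 0 \<le> height (take k (a @ b))" and k: "k \<le> length a"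
  have "take k (a @ b) = take k a" using k by simp
  moreover have "k \<le> length (a @ b)" using k by simp
  ultimately show "0 \<le> height (take k a)" using H by metis
qed

lemma sg_range: "sg a b \<ge> -1 \<and> sg a b \<le> 1" by (simp add: sg_def)

locale sw =
  fixes w1 w2 :: "nat list"
  assumes ne1: "w1 \<noteq> []" and ne2: "w2 \<noteq> []" and dw2: "distinct w2" and sets: "set w2 = set w1"
    and h1: "height w1 = 1" and h2: "height w2 = 1" and hb2: "hb w2"
    and sg1: "\<And>y. y \<notin> set w1 \<Longrightarrow> sg y (hd w2) = sg y (last w1)"
    and sg2: "\<And>y. y \<notin> set w1 \<Longrightarrow> sg y (last w2) = sg y (hd w1)"
begin

lemma EXT:
  assumes bp: "ballot p" and c: "decomp_cand w1 p (\<alpha>, \<gamma>, \<delta>)"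
    and s1: "sg (last (\<alpha> @ w1 @ \<gamma>)) (hd \<delta>) = 1" and m: "1 \<le> m" "m \<le> length \<delta>"
    and hm: "height (take m \<delta>) = -1"
    and hm': "\<And>m'. 1 \<le> m' \<Longrightarrow> m' \<le> m \<Longrightarrow> height (take m' \<delta>) \<ge> -1"
  shows "decomp_cand w1 p (\<alpha>, \<gamma> @ take m \<delta>, drop m \<delta>)"
proof -
  from c have p: "p = \<alpha> @ w1 @ \<gamma> @ \<delta>" and hP: "height (\<alpha> @ w1 @ \<gamma>) = 1"
    and bg: "ballot (rev \<gamma> @ [last w1])" by (auto simp: cand_simp h1)
  have bal: "distinct p" "\<forall>x\<in>set p. 0 < x" using bp by (auto simp: ballot_iff)
  have Pne: "\<alpha> @ w1 @ \<gamma> \<noteq> []" using ne1 by simp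
  have hPm: "height ((\<alpha> @ w1 @ \<gamma>) @ take m' \<delta>) = 2 + height (take m' \<delta>)"
    if "1 \<le> m'" "m' \<le> length \<delta>" for m'
    using height_take_hd[OF Pne that] s1 hP by simp
  define u where "u = \<alpha> @ w1"
  have lu: "u \<noteq> []" "last u = last w1" using ne1 by (auto simp: u_def)
  have hg: "\<forall>k\<le>length \<gamma>. height (u @ \<gamma>) \<le> height (u @ take k \<gamma>)"
    using bg ballot_rev_iff[OF lu] by blast
  have huP: "height (u @ \<gamma>) = 1" using hP by (simp add: u_def)
  show ?thesis unfolding cand_simp
  proof (intro conjI)
    show "p = \<alpha> @ w1 @ (\<gamma> @ take m \<delta>) @ drop m \<delta>" using p by simp
    show "height (\<alpha> @ w1 @ \<gamma> @ take m \<delta>) = height w1" using hPm[OF m] hm h1 by simp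
    have dx: "distinct (last w1 # \<gamma> @ take m \<delta>)"
    proof -
      have "distinct (\<alpha> @ (w1 @ \<gamma> @ \<delta>))" using bal(1) p by simp
      then have "distinct ((w1 @ \<gamma> @ take m \<delta>) @ drop m \<delta>)" by simp
      then have "distinct (w1 @ \<gamma> @ take m \<delta>)"
        by (simp only: distinct_append)
      moreover have "last w1 \<in> set w1" using ne1 by simp
      ultimately show ?thesis by auto
    qed
    have px: "\<forall>y\<in>set (last w1 # \<gamma> @ take m \<delta>). 0 < y"
      using bal(2) p ne1 set_take_subset[of m \<delta>] by auto
    have hx: "\<forall>k\<le>length (\<gamma> @ take m \<delta>). height (u @ \<gamma> @ take m \<delta>) \<le> height (u @ take k (\<gamma> @ take m \<delta>))"
    proof (intro allI impI)
      fix k assume k: "k \<le> length (\<gamma> @ take m \<delta>)"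
      have e1: "height (u @ \<gamma> @ take m \<delta>) = 1" using hPm[OF m] hm by (simp add: u_def)
      show "height (u @ \<gamma> @ take m \<delta>) \<le> height (u @ take k (\<gamma> @ take m \<delta>))"
      proof (cases "k \<le> length \<gamma>")
        case True then show ?thesis using hg huP e1 by simp
      next
        case False
        have k1: "1 \<le> k - length \<gamma>" "k - length \<gamma> \<le> m" using False k m by auto
        have tk: "take k (\<gamma> @ take m \<delta>) = \<gamma> @ take (k - length \<gamma>) \<delta>"
          using False k1 by (simp add: min_def)
        have "height (u @ take k (\<gamma> @ take m \<delta>)) = 2 + height (take (k - length \<gamma>) \<delta>)"
          using hPm[of "k - length \<gamma>"] k1 m tk by (simp add: u_def)
        then show ?thesis using hm'[OF k1] e1 by simp
      qed
    qed
    show "ballot (rev (\<gamma> @ take m \<delta>) @ [last w1])"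
      using ballot_rev_iff[OF lu, of "\<gamma> @ take m \<delta>"] dx px hx by blast
  qed
qed

lemma FWD:
  assumes bpp: "ballot_perm n p" and dec: "is_decomp w1 p (\<alpha>, \<gamma>, \<delta>)"
  shows "rev \<gamma> @ w2 @ rev \<alpha> @ \<delta> \<in> X n w2 \<and>
         is_decomp w2 (rev \<gamma> @ w2 @ rev \<alpha> @ \<delta>) (rev \<gamma>, rev \<alpha>, \<delta>)"
proof -
  have c: "decomp_cand w1 p (\<alpha>, \<gamma>, \<delta>)" using dec unfolding is_decomp_def by simp
  have maxi: "\<And>t'. decomp_cand w1 p t' \<Longrightarrow> length (fst (snd t')) \<le> length \<gamma>"
    using dec unfolding is_decomp_def fst_conv snd_conv by blast
  from c have p: "p = \<alpha> @ w1 @ \<gamma> @ \<delta>" and hP: "height (\<alpha> @ w1 @ \<gamma>) = 1"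
    and bg: "ballot (rev \<gamma> @ [last w1])" by (auto simp: cand_simp h1)
  have bp: "ballot p" using bpp by (simp add: ballot_perm_def)
  have bal: "distinct p" "\<forall>x\<in>set p. 0 < x" "hb p" using bp by (auto simp: ballot_iff)
  have D: "distinct \<alpha> \<and> distinct \<gamma> \<and> distinct \<delta> \<and> distinct w1 \<and> set \<alpha> \<inter> set w1 = {} \<and> set \<alpha> \<inter> set \<gamma> = {} \<and>
      set \<alpha> \<inter> set \<delta> = {} \<and> set w1 \<inter> set \<gamma> = {} \<and> set w1 \<inter> set \<delta> = {} \<and> set \<gamma> \<inter> set \<delta> = {}"
    using bal(1) unfolding p by auto
  define q where "q = rev \<gamma> @ w2 @ rev \<alpha> @ \<delta>"
  define P where "P = \<alpha> @ w1 @ \<gamma>"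
  define Q where "Q = rev \<gamma> @ w2 @ rev \<alpha>"
  have Pne: "P \<noteq> []" and Qne: "Q \<noteq> []" using ne1 ne2 by (auto simp: P_def Q_def)
  define A where "A = height (\<alpha> @ [hd w1])"
  define G where "G = height (last w1 # \<gamma>)"
  have AG: "A + G = 0" using hP height_3[OF ne1, of \<alpha> \<gamma>] h1 by (simp add: A_def G_def)
  have eG: "height (rev \<gamma> @ [hd w2]) = - G"
  proof -
    have "height (hd w2 # \<gamma>) = height (last w1 # \<gamma>)"
    proof (rule height_Cons_eq)
      assume "\<gamma> \<noteq> []"
      then have "hd \<gamma> \<notin> set w1" using D by (auto dest: hd_in_set)
      then show "sg (hd w2) (hd \<gamma>) = sg (last w1) (hd \<gamma>)"
        using sg1[of "hd \<gamma>"] sg_anti[of "hd \<gamma>" "hd w2"] sg_anti[of "hd \<gamma>" "last w1"] by simp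
    qed
    moreover have "rev \<gamma> @ [hd w2] = rev (hd w2 # \<gamma>)" by simp
    ultimately show ?thesis by (simp only: height_rev G_def)
  qed
  have eA': "height (\<alpha> @ [last w2]) = A"
    unfolding A_def
  proof (rule height_snoc_eq)
    assume "\<alpha> \<noteq> []"
    then have "last \<alpha> \<notin> set w1" using D by (auto dest: last_in_set)
    then show "sg (last \<alpha>) (last w2) = sg (last \<alpha>) (hd w1)" using sg2 by simp
  qed
  have eA: "height (last w2 # rev \<alpha>) = - A"
  proof -
    have "last w2 # rev \<alpha> = rev (\<alpha> @ [last w2])" by simp
    then show ?thesis using eA' by (simp only: height_rev)
  qed
  have hQ: "height Q = 1"
    using height_3[OF ne2, of "rev \<gamma>" "rev \<alpha>"] eG eA h2 AG by (simp add: Q_def)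
  have hbg: "hb (rev \<gamma> @ [last w1])" using bg by (simp add: ballot_iff)
  have G0: "G \<le> 0"
  proof -
    have "0 \<le> height (rev \<gamma> @ [last w1])" using hb_prefix[of "rev \<gamma> @ [last w1]" "[]"] hbg by simp
    moreover have "rev \<gamma> @ [last w1] = rev (last w1 # \<gamma>)" by simp
    then have "height (rev \<gamma> @ [last w1]) = - G" by (simp only: height_rev G_def)
    ultimately show ?thesis by simp
  qed
  have A0: "A \<ge> 0"
  proof -
    have "p = (\<alpha> @ [hd w1]) @ (tl w1 @ \<gamma> @ \<delta>)" using p ne1 by simp
    then show ?thesis using bal(3) hb_prefix unfolding A_def by metis
  qed
  have lw2: "last w2 \<in> set w1" using ne2 sets last_in_set by blast
  have S2: "ballot (\<alpha> @ [last w2])"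
    unfolding ballot_iff
  proof (intro conjI)
    show "distinct (\<alpha> @ [last w2])" using D lw2 by auto
    show "\<forall>x\<in>set (\<alpha> @ [last w2]). 0 < x" using bal(2) lw2 p by auto
    have "hb \<alpha>" using bal(3) p hb_prefix_hb by metis
    then show "hb (\<alpha> @ [last w2])"
      by (rule hb_app) (use eA' A0 in auto)
  qed
  have lu2: "rev \<gamma> @ w2 \<noteq> []" "last (rev \<gamma> @ w2) = last w2" using ne2 by auto
  have hal: "\<forall>k\<le>length (rev \<alpha>). height ((rev \<gamma> @ w2) @ rev \<alpha>) \<le> height ((rev \<gamma> @ w2) @ take k (rev \<alpha>))"
    using ballot_rev_iff[OF lu2, of "rev \<alpha>"] S2 by simp
  have candq: "decomp_cand w2 q (rev \<gamma>, rev \<alpha>, \<delta>)"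
    unfolding cand_simp using hQ S2 h2 by (simp add: q_def Q_def)
  have Pdel: "\<delta> \<noteq> [] \<Longrightarrow> last P \<noteq> hd \<delta>"
  proof -
    assume "\<delta> \<noteq> []"
    moreover have "last P \<in> set \<alpha> \<union> set w1 \<union> set \<gamma>" using Pne last_in_set[OF Pne] by (auto simp: P_def)
    ultimately show ?thesis using D hd_in_set[of \<delta>] by auto
  qed
  have Qdel: "\<delta> \<noteq> [] \<Longrightarrow> last Q \<noteq> hd \<delta>"
  proof -
    assume "\<delta> \<noteq> []"
    moreover have "last Q \<in> set \<alpha> \<union> set w1 \<union> set \<gamma>" using Qne last_in_set[OF Qne] sets by (auto simp: Q_def)
    ultimately show ?thesis using D hd_in_set[of \<delta>] by auto
  qed
  have hPt: "height (P @ take m \<delta>) = 1 + sg (last P) (hd \<delta>) + height (take m \<delta>)"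
    if "1 \<le> m" "m \<le> length \<delta>" for m
    using height_take_hd[OF Pne that] hP by (simp add: P_def)
  have hQt: "height (Q @ take m \<delta>) = 1 + sg (last Q) (hd \<delta>) + height (take m \<delta>)"
    if "1 \<le> m" "m \<le> length \<delta>" for m
    using height_take_hd[OF Qne that] hQ by simp
  have Pt0: "0 \<le> height (P @ take m \<delta>)" for m
  proof -
    have "p = (P @ take m \<delta>) @ drop m \<delta>" using p by (simp add: P_def)
    then show ?thesis using bal(3) hb_prefix by metis
  qed
  have noext: False if "sg (last P) (hd \<delta>) = 1" "1 \<le> m" "m \<le> length \<delta>" "height (take m \<delta>) = -1"
     "\<And>m'. 1 \<le> m' \<Longrightarrow> m' \<le> m \<Longrightarrow> height (take m' \<delta>) \<ge> -1" for m
  proof -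
    have "decomp_cand w1 p (\<alpha>, \<gamma> @ take m \<delta>, drop m \<delta>)"
      by (rule EXT[OF bp c]) (use that in \<open>simp_all add: P_def\<close>)
    from maxi[OF this] that(2,3) show False by simp
  qed
  have NONNEG: "0 \<le> height (take k \<delta>)" if sP: "sg (last P) (hd \<delta>) = 1" and k: "1 \<le> k" "k \<le> length \<delta>" for k
  proof (rule ccontr)
    assume neg: "\<not> 0 \<le> height (take k \<delta>)"
    define S where "S = {k. 1 \<le> k \<and> k \<le> length \<delta> \<and> height (take k \<delta>) < 0}"
    have "k \<in> S" using neg k by (simp add: S_def)
    define m where "m = (LEAST k. k \<in> S)"
    have mS: "m \<in> S" unfolding m_def by (rule LeastI) fact
    have below: "0 \<le> height (take m' \<delta>)" if "m' < m" for m'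
    proof (cases "m' = 0")
      case True then show ?thesis by simp
    next
      case False
      have "m' \<notin> S" using not_less_Least[of m' "\<lambda>k. k \<in> S"] that m_def by simp
      then show ?thesis using False that mS by (simp add: S_def)
    qed
    obtain m'' where m'': "m = Suc m''" using mS by (cases m) (auto simp: S_def)
    have "height (take (Suc m'') \<delta>) \<ge> height (take m'' \<delta>) - 1"
      using mS m'' by (intro height_take_step) (simp add: S_def)
    then have hm: "height (take m \<delta>) = -1" using below[of m''] mS m'' by (simp add: S_def)
    show False
    proof (rule noext[OF sP, of m])
      show "1 \<le> m" "m \<le> length \<delta>" using mS by (auto simp: S_def)
      show "height (take m \<delta>) = -1" by (fact hm)
      fix m' assume "1 \<le> m'" "m' \<le> m"
      then show "height (take m' \<delta>) \<ge> -1" using below[of m'] hm by (cases "m' = m") auto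
    qed
  qed
  have dq: "distinct q" using D dw2 sets by (auto simp: q_def)
  have sq: "set q = set p" using sets by (auto simp: q_def p)
  have hbq: "hb q"
    unfolding q_def
  proof (rule hb_app)
    show "hb (rev \<gamma>)" using hbg hb_prefix_hb by blast
    fix k assume k: "1 \<le> k" "k \<le> length (w2 @ rev \<alpha> @ \<delta>)"
    show "0 \<le> height (rev \<gamma> @ take k (w2 @ rev \<alpha> @ \<delta>))"
    proof (cases "k \<le> length w2")
      case True
      have tne: "take k w2 \<noteq> []" using k ne2 by simp
      have "height (rev \<gamma> @ take k w2) = height (rev \<gamma> @ [hd w2]) + height (take k w2)"
        using height_app_hd[OF tne, of "rev \<gamma>"] k by (simp add: hd_take)
      moreover have "0 \<le> height (take k w2)" using hb2 hb_take by blast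
      ultimately show ?thesis using True eG G0 by simp
    next
      case False
      show ?thesis
      proof (cases "k \<le> length w2 + length \<alpha>")
        case True
        have "take k (w2 @ rev \<alpha> @ \<delta>) = w2 @ take (k - length w2) (rev \<alpha>)"
          using True False by simp
        moreover have "k - length w2 \<le> length (rev \<alpha>)" using True by simp
        ultimately show ?thesis using hal hQ by (simp add: Q_def) (smt (verit))
      next
        case False2: False
        define m where "m = k - length w2 - length \<alpha>"
        have m: "1 \<le> m" "m \<le> length \<delta>" using k False False2 by (auto simp: m_def)
        have "take k (w2 @ rev \<alpha> @ \<delta>) = w2 @ rev \<alpha> @ take m \<delta>"
          using False False2 by (simp add: m_def)
        then have e: "rev \<gamma> @ take k (w2 @ rev \<alpha> @ \<delta>) = Q @ take m \<delta>" by (simp add: Q_def)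
        have dn: "\<delta> \<noteq> []" using m by auto
        have "0 \<le> height (Q @ take m \<delta>)"
        proof (cases "sg (last P) (hd \<delta>) = 1")
          case True
          then show ?thesis using NONNEG[OF True m] hQt[OF m] sg_range[of "last Q" "hd \<delta>"] by simp
        next
          case False
          then have "sg (last P) (hd \<delta>) = -1" using sg_pm[OF Pdel[OF dn]] by simp
          then show ?thesis using Pt0[of m] hPt[OF m] hQt[OF m] sg_range[of "last Q" "hd \<delta>"] by simp
        qed
        then show ?thesis using e by simp
      qed
    qed
  qed
  have bpq: "ballot_perm n q"
  proof -
    have "length w2 = length w1" using distinct_card[OF dw2] distinct_card[of w1] D sets by simp
    then have "length q = length p" by (simp add: q_def p)
    then show ?thesis using bpp dq sq hbq bal(2) by (simp add: ballot_perm_def ballot_iff)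
  qed
  have maxq: "length (fst (snd t')) \<le> length \<alpha>" if ct: "decomp_cand w2 q t'" for t'
  proof -
    obtain a2 g2 d2 where t': "t' = (a2, g2, d2)" by (cases t') auto
    from ct have q2: "q = a2 @ w2 @ g2 @ d2" and hq2: "height (a2 @ w2 @ g2) = 1"
      and bg2: "ballot (rev g2 @ [last w2])" by (auto simp: t' cand_simp h2)
    have dq': "distinct (rev \<gamma> @ w2 @ (rev \<alpha> @ \<delta>))" using dq by (simp add: q_def)
    have "rev \<gamma> = a2 \<and> rev \<alpha> @ \<delta> = g2 @ d2"
      by (rule POS[OF dq' ne2]) (use q2 in \<open>simp add: q_def\<close>)
    then have a2: "a2 = rev \<gamma>" and gd: "g2 @ d2 = rev \<alpha> @ \<delta>" by auto
    show ?thesis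
    proof (rule ccontr)
      assume "\<not> length (fst (snd t')) \<le> length \<alpha>"
      then have gl: "length g2 > length \<alpha>" by (simp add: t')
      define m where "m = length g2 - length \<alpha>"
      have "length g2 \<le> length (rev \<alpha> @ \<delta>)" using gd by (metis le_add1 length_append)
      then have m: "1 \<le> m" "m \<le> length \<delta>" using gl by (auto simp: m_def)
      have "g2 = take (length g2) (g2 @ d2)" by simp
      then have g2: "g2 = rev \<alpha> @ take m \<delta>" using gl gd by (simp add: m_def)
      have hQm: "height (Q @ take m \<delta>) = 1" using hq2 a2 g2 by (simp add: Q_def)
      have hg2: "\<forall>k\<le>length g2. height ((rev \<gamma> @ w2) @ g2) \<le> height ((rev \<gamma> @ w2) @ take k g2)"
        using ballot_rev_iff[OF lu2, of g2] bg2 by simp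
      have geq: "1 \<le> height (Q @ take m' \<delta>)" if "1 \<le> m'" "m' \<le> m" for m'
      proof -
        have "length \<alpha> + m' \<le> length g2" using that m by (simp add: g2)
        then have "height ((rev \<gamma> @ w2) @ g2) \<le> height ((rev \<gamma> @ w2) @ take (length \<alpha> + m') g2)"
          using hg2 by blast
        moreover have "take (length \<alpha> + m') g2 = rev \<alpha> @ take m' \<delta>" using that by (simp add: g2)
        ultimately show ?thesis using hQm g2 by (simp add: Q_def)
      qed
      have dn: "\<delta> \<noteq> []" using m by auto
      show False
      proof (cases "sg (last Q) (hd \<delta>) = 1")
        case False
        then have "sg (last Q) (hd \<delta>) = -1" using sg_pm[OF Qdel[OF dn]] by simp
        then show False using geq[of 1] hQt[of 1] m height_take1 by simp
      next
        case sQ: True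
        then have hm: "height (take m \<delta>) = -1" using hQm hQt[OF m] by simp
        show False
        proof (cases "sg (last P) (hd \<delta>) = 1")
          case True
          show False
          proof (rule noext[OF True m hm])
            fix m' assume m': "1 \<le> m'" "m' \<le> m"
            then show "height (take m' \<delta>) \<ge> -1" using geq[OF m'] hQt[of m'] sQ m by simp
          qed
        next
          case False
          then have "sg (last P) (hd \<delta>) = -1" using sg_pm[OF Pdel[OF dn]] by simp
          then show False using Pt0[of m] hPt[OF m] hm by simp
        qed
      qed
    qed
  qed
  have "q = rev \<gamma> @ w2 @ rev \<alpha> @ \<delta> \<and> height (rev \<gamma> @ w2 @ rev \<alpha>) = height w2"
    using hQ h2 by (simp add: q_def Q_def)
  then have "q \<in> X n w2"
    unfolding X_def using bpq by blast
  moreover have "is_decomp w2 q (rev \<gamma>, rev \<alpha>, \<delta>)"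
    unfolding is_decomp_def using candq maxq by simp
  ultimately show ?thesis by (simp add: q_def)
qed

lemma X_distinct: "p \<in> X n w \<Longrightarrow> distinct p"
  by (simp add: X_def ballot_perm_def)

lemma MAIN1:
  assumes "p \<in> X n w1" "decomp w1 p = (\<alpha>, \<gamma>, \<delta>)"
  shows "rev \<gamma> @ w2 @ rev \<alpha> @ \<delta> \<in> X n w2 \<and> decomp w2 (rev \<gamma> @ w2 @ rev \<alpha> @ \<delta>) = (rev \<gamma>, rev \<alpha>, \<delta>)"
proof -
  obtain t where t: "is_decomp w1 p t" using EXIST[OF assms(1) ne1] by blast
  have "decomp w1 p = t" by (rule DEC[OF X_distinct[OF assms(1)] ne1 t])
  then have d: "is_decomp w1 p (\<alpha>, \<gamma>, \<delta>)" using t assms(2) by simp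
  have bp: "ballot_perm n p" using assms(1) by (simp add: X_def)
  have F: "rev \<gamma> @ w2 @ rev \<alpha> @ \<delta> \<in> X n w2 \<and> is_decomp w2 (rev \<gamma> @ w2 @ rev \<alpha> @ \<delta>) (rev \<gamma>, rev \<alpha>, \<delta>)"
    by (rule FWD[OF bp d])
  then show ?thesis using DEC[OF X_distinct ne2] by blast
qed

lemma MAIN2:
  assumes "p \<in> X n w1"
  shows "swap_map w1 w2 p \<in> X n w2 \<and> decomp w2 (swap_map w1 w2 p) = (case decomp w1 p of (\<alpha>, \<gamma>, \<delta>) \<Rightarrow> (rev \<gamma>, rev \<alpha>, \<delta>))
     \<and> swap_map w2 w1 (swap_map w1 w2 p) = p"
proof -
  obtain \<alpha> \<gamma> \<delta> where e: "decomp w1 p = (\<alpha>, \<gamma>, \<delta>)" by (cases "decomp w1 p") auto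
  obtain t where t: "is_decomp w1 p t" using EXIST[OF assms(1) ne1] by blast
  have "decomp w1 p = t" by (rule DEC[OF X_distinct[OF assms(1)] ne1 t])
  then have "is_decomp w1 p (\<alpha>, \<gamma>, \<delta>)" using t e by simp
  then have p: "p = \<alpha> @ w1 @ \<gamma> @ \<delta>" by (simp add: is_decomp_def cand_simp)
  have sm: "swap_map w1 w2 p = rev \<gamma> @ w2 @ rev \<alpha> @ \<delta>" by (simp add: swap_map_def e)
  have M: "rev \<gamma> @ w2 @ rev \<alpha> @ \<delta> \<in> X n w2 \<and> decomp w2 (rev \<gamma> @ w2 @ rev \<alpha> @ \<delta>) = (rev \<gamma>, rev \<alpha>, \<delta>)"
    by (rule MAIN1[OF assms e])
  have "swap_map w2 w1 (swap_map w1 w2 p) = swap_map w2 w1 (rev \<gamma> @ w2 @ rev \<alpha> @ \<delta>)" by (simp only: sm)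
  also have "\<dots> = rev (rev \<alpha>) @ w1 @ rev (rev \<gamma>) @ \<delta>" using M by (simp only: swap_map_def) simp
  also have "\<dots> = p" using p by simp
  finally have "swap_map w2 w1 (swap_map w1 w2 p) = p" .
  then show ?thesis using M sm e by simp
qed

end

theorem theorem2p3:
  fixes n i j :: nat
  assumes "0 < n" "0 < i" "0 < j" "i + 2 \<le> j" "j \<le> n - 1"
  defines "lam \<equiv> [i, n, j - 1, j]" and "mu \<equiv> [j - 1, j, n, i]"
  shows "(\<forall>p \<alpha> \<gamma> \<delta>. p \<in> X n lam \<longrightarrow> decomp lam p = (\<alpha>, \<gamma>, \<delta>) \<longrightarrow>
            rev \<gamma> @ mu @ rev \<alpha> @ \<delta> \<in> X n mu \<and>
            decomp mu (rev \<gamma> @ mu @ rev \<alpha> @ \<delta>) = (rev \<gamma>, rev \<alpha>, \<delta>))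
       \<and> bij_betw (swap_map lam mu) (X n lam) (X n mu)
       \<and> (\<forall>s \<in> X n mu. swap_map mu lam s \<in> X n lam \<and> swap_map lam mu (swap_map mu lam s) = s)
       \<and> (\<forall>p \<in> X n lam. swap_map mu lam (swap_map lam mu p) = p)"
proof -
  have ij: "i < j - 1" "j - 1 < j" "j < n" "0 < i" using assms(1-5) by auto
  have sgl: "sg i n = 1" "sg n (j - 1) = -1" "sg (j - 1) j = 1" "sg j n = 1" "sg n i = -1"
    using ij by (auto simp: sg_def)
  have hl: "height lam = 1" using sgl by (simp add: lam_def)
  have hm: "height mu = 1" using sgl by (simp add: mu_def)
  have hbm: "hb mu" unfolding hb_def
  proof (intro allI impI)
    fix k assume "k \<le> length mu"
    then have "k = 0 \<or> k = 1 \<or> k = 2 \<or> k = 3 \<or> k = 4" by (auto simp: mu_def)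
    then show "0 \<le> height (take k mu)" using sgl by (auto simp: mu_def numeral_eq_Suc)
  qed
  have hbl: "hb lam" unfolding hb_def
  proof (intro allI impI)
    fix k assume "k \<le> length lam"
    then have "k = 0 \<or> k = 1 \<or> k = 2 \<or> k = 3 \<or> k = 4" by (auto simp: lam_def)
    then show "0 \<le> height (take k lam)" using sgl by (auto simp: lam_def numeral_eq_Suc)
  qed
  have dl: "distinct lam" "distinct mu" using ij by (auto simp: lam_def mu_def)
  have st: "set mu = set lam" by (auto simp: lam_def mu_def)
  have sgj: "sg y (j - 1) = sg y j" if "y \<noteq> j - 1" "y \<noteq> j" for y
    using that ij by (auto simp: sg_def)
  interpret L: sw lam mu
    by (unfold_locales) (use hl hm hbm dl st sgj in \<open>auto simp: lam_def mu_def\<close>)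
  interpret M: sw mu lam
    by (unfold_locales) (use hl hm hbl dl st sgj in \<open>auto simp: lam_def mu_def\<close>)
  show ?thesis
  proof (intro conjI)
    show "\<forall>p \<alpha> \<gamma> \<delta>. p \<in> X n lam \<longrightarrow> decomp lam p = (\<alpha>, \<gamma>, \<delta>) \<longrightarrow>
            rev \<gamma> @ mu @ rev \<alpha> @ \<delta> \<in> X n mu \<and>
            decomp mu (rev \<gamma> @ mu @ rev \<alpha> @ \<delta>) = (rev \<gamma>, rev \<alpha>, \<delta>)"
      using L.MAIN1 by blast
    show A: "\<forall>s \<in> X n mu. swap_map mu lam s \<in> X n lam \<and> swap_map lam mu (swap_map mu lam s) = s"
      using M.MAIN2 by blast
    show B: "\<forall>p \<in> X n lam. swap_map mu lam (swap_map lam mu p) = p"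
      using L.MAIN2 by blast
    show "bij_betw (swap_map lam mu) (X n lam) (X n mu)"
    proof (rule bij_betw_byWitness[where f' = "swap_map mu lam"])
      show "\<forall>a\<in>X n lam. swap_map mu lam (swap_map lam mu a) = a" by (fact B)
      show "\<forall>a'\<in>X n mu. swap_map lam mu (swap_map mu lam a') = a'" using A by blast
      show "swap_map lam mu ` X n lam \<subseteq> X n mu" using L.MAIN2 by blast
      show "swap_map mu lam ` X n mu \<subseteq> X n lam" using M.MAIN2 by blast
    qed
  qed
qed

end
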